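(* For any field $\mathbb{F}$ and any matrix $M\in\mathbb{F}^{2\times2}$, the $8\times 8$ matrix $M^{\otimes 3}$ satisfies $\mathcal{R}_{M^{\otimes 3}}(1)\le 23$.
   Context: $\mathcal{R}_A(r)=\min\{\mathrm{nnz}(B):\mathrm{rank}(A+B)\le r\}$ is the rank-$r$ rigidity of $A$ over $\mathbb{F}$ (minimum number of entries to change to get rank $\le r$). *)

theory Defs
  imports "Jordan_Normal_Form.DL_Rank"
begin

definition kron_mat :: "'a::field mat \<Rightarrow> 'a mat \<Rightarrow> 'a mat" where
  "kron_mat A B = mat (dim_row A * dim_row B) (dim_col A * dim_col B)
     (\<lambda>(i,j). A $$ (i div dim_row B, j div dim_col B) * B $$ (i mod dim_row B, j mod dim_col B))"

definition nnz :: "'a::field mat \<Rightarrow> nat" where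
  "nnz B = card {(i,j). i < dim_row B \<and> j < dim_col B \<and> B $$ (i,j) \<noteq> 0}"

definition rigidity :: "'a::field mat \<Rightarrow> nat \<Rightarrow> nat" where
  "rigidity A r = Min {nnz B | B. B \<in> carrier_mat (dim_row A) (dim_col A)
        \<and> vec_space.rank (dim_row A) (A + B) \<le> r}"

end

theory Submission
  imports Defs
begin

lemma less8: "i < (8::nat) \<Longrightarrow> i = 0 \<or> i = 1 \<or> i = 2 \<or> i = 3 \<or> i = 4 \<or> i = 5 \<or> i = 6 \<or> i = 7"
  by presburger

lemma key:
  fixes A :: "'a::field mat" and f g :: "nat \<Rightarrow> 'a"
  assumes A: "A \<in> carrier_mat 8 8" and T: "finite T" "card T \<le> 23"
    and agree: "\<forall>i<8. \<forall>j<8. (i,j) \<notin> T \<longrightarrow> f i * g j = A $$ (i,j)"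
  shows "rigidity A 1 \<le> 23"
proof -
  define B where "B = mat 8 8 (\<lambda>(i,j). f i * g j - A $$ (i,j))"
  have Bc: "B \<in> carrier_mat 8 8" unfolding B_def by simp
  have AB: "(A + B) $$ (i,j) = f i * g j" if "i < dim_row (A+B)" "j < dim_col (A+B)" for i j
    using that A by (auto simp: B_def)
  have rk: "vec_space.rank 8 (A + B) \<le> 1"
    by (rule vec_space.rank_le_1_product_entries[of "A+B" 8 8 f g]) (use A Bc AB in auto)
  have "{(i,j). i < dim_row B \<and> j < dim_col B \<and> B $$ (i,j) \<noteq> 0} \<subseteq> T"
    using agree A by (auto simp: B_def) blast
  hence nB: "nnz B \<le> 23" unfolding nnz_def using T card_mono order_trans by blast
  let ?S = "{nnz B | B. B \<in> carrier_mat (dim_row A) (dim_col A) \<and> vec_space.rank (dim_row A) (A + B) \<le> 1}"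
  have mem: "nnz B \<in> ?S" using A Bc rk by auto
  have "?S \<subseteq> {..64}"
  proof
    fix x assume "x \<in> ?S"
    then obtain C :: "'a mat" where x: "x = nnz C" and C0: "C \<in> carrier_mat (dim_row A) (dim_col A)" by auto
    have C: "C \<in> carrier_mat 8 8" using C0 A by simp
    have "{(i,j). i < dim_row C \<and> j < dim_col C \<and> C $$ (i,j) \<noteq> 0} \<subseteq> {..<8} \<times> {..<8}"
      using C by auto
    hence "nnz C \<le> card ({..<8::nat} \<times> {..<8::nat})" unfolding nnz_def
      by (intro card_mono) auto
    thus "x \<in> {..64}" using x by (simp add: card_cartesian_product)
  qed
  hence fin: "finite ?S" using finite_subset by blast
  have "rigidity A 1 \<le> nnz B" unfolding rigidity_def using Min_le[OF fin mem] .
  thus ?thesis using nB by simp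
qed


lemma kron_dims: "M \<in> carrier_mat 2 2 \<Longrightarrow> kron_mat M (kron_mat M M) \<in> carrier_mat 8 8"
  by (simp add: kron_mat_def)

lemma Ae: "M \<in> carrier_mat 2 2 \<Longrightarrow> i < 8 \<Longrightarrow> j < 8 \<Longrightarrow>
   kron_mat M (kron_mat M M) $$ (i,j) = M $$ (i div 4, j div 4) * (M $$ ((i mod 4) div 2, (j mod 4) div 2) * M $$ (i mod 2, j mod 2))"
proof -
  assume M: "M \<in> carrier_mat 2 2" and i: "i < 8" and j: "j < 8"
  have K: "kron_mat M M \<in> carrier_mat 4 4" using M by (simp add: kron_mat_def)
  have "i mod 4 < 4" "j mod 4 < 4" by simp_all
  then have "kron_mat M M $$ (i mod 4, j mod 4) = M $$ ((i mod 4) div 2, (j mod 4) div 2) * M $$ (i mod 4 mod 2, j mod 4 mod 2)"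
    using M by (simp add: kron_mat_def)
  moreover have "i mod 4 mod 2 = i mod 2" "j mod 4 mod 2 = j mod 2" by (simp_all add: mod_mod_cancel)
  moreover have "kron_mat M (kron_mat M M) $$ (i,j) = M $$ (i div 4, j div 4) * kron_mat M M $$ (i mod 4, j mod 4)"
    using M K i j by (simp add: kron_mat_def[of M "kron_mat M M"])
  ultimately show ?thesis by simp
qed

lemma case_gen:
  fixes M :: "'a::field mat"
  assumes "M \<in> carrier_mat 2 2" "M $$ (0,0) \<noteq> 0" "M $$ (0,1) \<noteq> 0" "M $$ (1,0) \<noteq> 0" "M $$ (1,1) \<noteq> 0" "i < 8" "j < 8" 
   "(i,j) \<notin> {(0,3), (0,5), (0,6), (0,7), (1,1), (1,6), (1,7), (2,2), (2,5), (2,7), (3,1), (3,2), (3,3), (4,3), (4,4), (4,7), (5,1), (5,4), (5,5), (6,2), (6,4), (6,6), (7,0)}"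
  shows "(M $$ (i div 4, 0) * (M $$ ((i mod 4) div 2, 0) * M $$ (i mod 2, 0)) * (if i = 7 then (M $$ (0,0) * M $$ (1,1) / (M $$ (0,1) * M $$ (1,0))) else 1)) * (M $$ (0, j div 4) * (M $$ (0, (j mod 4) div 2) * M $$ (0, j mod 2)) / (M $$ (0,0))^3 * (M $$ (0,0) * M $$ (1,1) / (M $$ (0,1) * M $$ (1,0))) ^ (if j = 3 \<or> j = 5 \<or> j = 6 then 1 else if j = 7 then 2 else 0)) = kron_mat M (kron_mat M M) $$ (i,j)"
proof -
  have nz: "M $$ (Suc 0, 0) \<noteq> 0" "M $$ (0, Suc 0) \<noteq> 0" "M $$ (Suc 0, Suc 0) \<noteq> 0"
    using assms(3-5) by simp_all
  show ?thesis
  using less8[OF assms(6)] less8[OF assms(7)] assms(8)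
  apply (elim disjE)
  apply (simp_all add: Ae[OF assms(1)])
  apply (simp_all add: field_simps assms(2-5) nz power2_eq_square power3_eq_cube)
  done
qed

lemma case_a0:
  fixes M :: "'a::field mat"
  assumes "M \<in> carrier_mat 2 2" "M $$ (0,0) = 0" "i < 8" "j < 8" "(i,j) \<notin> {(0,7), (1,6), (1,7), (2,5), (2,7), (3,4), (3,5), (3,6), (3,7), (4,3), (4,7), (5,2), (5,3), (5,6), (5,7), (6,1), (6,3), (6,5), (6,7)}"
  shows "(if i = 7 then 1 else 0) * kron_mat M (kron_mat M M) $$ (7,j) = kron_mat M (kron_mat M M) $$ (i,j)"
proof -
  have z: "M $$ (0, 0) = 0" using assms(2) by simp
  show ?thesis
  using less8[OF assms(3)] less8[OF assms(4)] assms(5) z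
  by (elim disjE) (simp_all add: Ae[OF assms(1)])
qed

lemma case_b0:
  fixes M :: "'a::field mat"
  assumes "M \<in> carrier_mat 2 2" "M $$ (0,1) = 0" "i < 8" "j < 8" "(i,j) \<notin> {(0,0), (1,0), (1,1), (2,0), (2,2), (3,0), (3,1), (3,2), (3,3), (4,0), (4,4), (5,0), (5,1), (5,4), (5,5), (6,0), (6,2), (6,4), (6,6)}"
  shows "(if i = 7 then 1 else 0) * kron_mat M (kron_mat M M) $$ (7,j) = kron_mat M (kron_mat M M) $$ (i,j)"
proof -
  have z: "M $$ (0,Suc 0) = 0" using assms(2) by simp
  show ?thesis
  using less8[OF assms(3)] less8[OF assms(4)] assms(5) z
  by (elim disjE) (simp_all add: Ae[OF assms(1)])
qed

lemma case_c0:
  fixes M :: "'a::field mat"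
  assumes "M \<in> carrier_mat 2 2" "M $$ (1,0) = 0" "i < 8" "j < 8" "(i,j) \<notin> {(1,1), (1,3), (1,5), (1,7), (2,2), (2,3), (2,6), (2,7), (3,3), (3,7), (4,4), (4,5), (4,6), (4,7), (5,5), (5,7), (6,6), (6,7), (7,7)}"
  shows "(if i = 0 then 1 else 0) * kron_mat M (kron_mat M M) $$ (0,j) = kron_mat M (kron_mat M M) $$ (i,j)"
proof -
  have z: "M $$ (Suc 0,0) = 0" using assms(2) by simp
  show ?thesis
  using less8[OF assms(3)] less8[OF assms(4)] assms(5) z
  by (elim disjE) (simp_all add: Ae[OF assms(1)])
qed

lemma case_d0:
  fixes M :: "'a::field mat"
  assumes "M \<in> carrier_mat 2 2" "M $$ (1,1) = 0" "i < 8" "j < 8" "(i,j) \<notin> {(1,0), (1,2), (1,4), (1,6), (2,0), (2,1), (2,4), (2,5), (3,0), (3,4), (4,0), (4,1), (4,2), (4,3), (5,0), (5,2), (6,0), (6,1), (7,0)}"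
  shows "(if i = 0 then 1 else 0) * kron_mat M (kron_mat M M) $$ (0,j) = kron_mat M (kron_mat M M) $$ (i,j)"
proof -
  have z: "M $$ (Suc 0,Suc 0) = 0" using assms(2) by simp
  show ?thesis
  using less8[OF assms(3)] less8[OF assms(4)] assms(5) z
  by (elim disjE) (simp_all add: Ae[OF assms(1)])
qed

theorem mainTheorem7:
  fixes M :: "'a::field mat"
  assumes "M \<in> carrier_mat 2 2"
  shows "rigidity (kron_mat M (kron_mat M M)) 1 \<le> 23"
proof -
  have Ac: "kron_mat M (kron_mat M M) \<in> carrier_mat 8 8" using kron_dims[OF assms] .
  consider (gen) "M $$ (0,0) \<noteq> 0" "M $$ (0,1) \<noteq> 0" "M $$ (1,0) \<noteq> 0" "M $$ (1,1) \<noteq> 0"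
    | (a0) "M $$ (0,0) = 0" | (b0) "M $$ (0,1) = 0" | (c0) "M $$ (1,0) = 0" | (d0) "M $$ (1,1) = 0" by blast
  then show ?thesis
  proof cases
    case gen
    show ?thesis
      by (rule key[OF Ac, where f="(\<lambda>i. M $$ (i div 4, 0) * (M $$ ((i mod 4) div 2, 0) * M $$ (i mod 2, 0)) * (if i = 7 then (M $$ (0,0) * M $$ (1,1) / (M $$ (0,1) * M $$ (1,0))) else 1))" and g="(\<lambda>j. M $$ (0, j div 4) * (M $$ (0, (j mod 4) div 2) * M $$ (0, j mod 2)) / (M $$ (0,0))^3 * (M $$ (0,0) * M $$ (1,1) / (M $$ (0,1) * M $$ (1,0))) ^ (if j = 3 \<or> j = 5 \<or> j = 6 then 1 else if j = 7 then 2 else 0))" and T="{(0,3), (0,5), (0,6), (0,7), (1,1), (1,6), (1,7), (2,2), (2,5), (2,7), (3,1), (3,2), (3,3), (4,3), (4,4), (4,7), (5,1), (5,4), (5,5), (6,2), (6,4), (6,6), (7,0)}"])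
         (simp, simp, intro allI impI, rule case_gen[OF assms gen], auto)
  next
    case a0
    show ?thesis
      by (rule key[OF Ac, where f="(\<lambda>i. if i = 7 then 1 else 0)" and g="(\<lambda>j. kron_mat M (kron_mat M M) $$ (7,j))" and T="{(0,7), (1,6), (1,7), (2,5), (2,7), (3,4), (3,5), (3,6), (3,7), (4,3), (4,7), (5,2), (5,3), (5,6), (5,7), (6,1), (6,3), (6,5), (6,7)}"])
         (simp, simp, intro allI impI, rule case_a0[OF assms a0], auto)
  next
    case b0
    show ?thesis
      by (rule key[OF Ac, where f="(\<lambda>i. if i = 7 then 1 else 0)" and g="(\<lambda>j. kron_mat M (kron_mat M M) $$ (7,j))" and T="{(0,0), (1,0), (1,1), (2,0), (2,2), (3,0), (3,1), (3,2), (3,3), (4,0), (4,4), (5,0), (5,1), (5,4), (5,5), (6,0), (6,2), (6,4), (6,6)}"])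
         (simp, simp, intro allI impI, rule case_b0[OF assms b0], auto)
  next
    case c0
    show ?thesis
      by (rule key[OF Ac, where f="(\<lambda>i. if i = 0 then 1 else 0)" and g="(\<lambda>j. kron_mat M (kron_mat M M) $$ (0,j))" and T="{(1,1), (1,3), (1,5), (1,7), (2,2), (2,3), (2,6), (2,7), (3,3), (3,7), (4,4), (4,5), (4,6), (4,7), (5,5), (5,7), (6,6), (6,7), (7,7)}"])
         (simp, simp, intro allI impI, rule case_c0[OF assms c0], auto)
  next
    case d0
    show ?thesis
      by (rule key[OF Ac, where f="(\<lambda>i. if i = 0 then 1 else 0)" and g="(\<lambda>j. kron_mat M (kron_mat M M) $$ (0,j))" and T="{(1,0), (1,2), (1,4), (1,6), (2,0), (2,1), (2,4), (2,5), (3,0), (3,4), (4,0), (4,1), (4,2), (4,3), (5,0), (5,2), (6,0), (6,1), (7,0)}"])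
         (simp, simp, intro allI impI, rule case_d0[OF assms d0], auto)
  qed
qed

end
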